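(* Let $R\in\{R^L,R^C,R^V\}$ and let $\mathbf{u}$ be any utility profile. If a ballot vector $\mathbf{b}$ is a PNE of $(\mathcal{T},R,\mathbf{u})$, then for every voter $i\in N$ either $b_i=a_i$ or $b_i\in W(\mathbf{b})$.
   Context: Let $C=\{c_1,\dots,c_m\}$ be candidates and $N=\{1,\dots,n\}$ voters, each with an injective utility function $u_i:C\to\mathbb{N}$ inducing $c\succ_i c'$ iff $u_i(c)>u_i(c')$; $a_i$ is $i$'s top candidate. A ballot vector is $\mathbf{b}=(b_1,\dots,b_n)$ with $b_i\in C\cup\{\bot\}$ ($\bot$ = abstain); $(\mathbf{b}_{-i},b')$ replaces $b_i$ by $b'$. $\mathrm{sc}(c,\mathbf{b})=|\{i:b_i=c\}|$, $M(\mathbf{b})=\max_c\mathrm{sc}(c,\mathbf{b})$, $W(\mathbf{b})=\{c:\mathrm{sc}(c,\mathbf{b})=M(\mathbf{b})\}$ (equal to $C$ if all abstain). If $|W(\mathbf{b})|=1$ its element wins; otherwise: $R^L$ picks the $c_j\in W(\mathbf{b})$ with smallest index; $R^C$ picks uniformly at random from $W(\mathbf{b})$; $R^V$ picks a uniformly random voter $i\in N$ and outputs $b_i$ if $b_i\in W(\mathbf{b})$, else $i$'s most preferred candidate in $W(\mathbf{b})$. Let $p_j(\mathbf{b})$ be the probability that $c_j$ wins. Fix $0<\varepsilon<\min\{1/m,1/n\}$. In the truth-biased setting $\mathcal{T}$, voter $i$'s utility is $U_i(\mathbf{b})=\sum_jp_j(\mathbf{b})u_i(c_j)$ if $b_i\in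 C\setminus\{a_i\}$, $\sum_jp_j(\mathbf{b})u_i(c_j)+\varepsilon$ if $b_i=a_i$, and $-\infty$ if $b_i=\bot$. The game $(\mathcal{T},R,\mathbf{u})$ has players $N$ with action sets $C\cup\{\bot\}$. A PNE is a ballot vector $\mathbf{b}$ with $U_i(\mathbf{b})\ge U_i(\mathbf{b}_{-i},b')$ for all $i\in N$ and $b'\in C\cup\{\bot\}$. *)

theory Defs
  imports Complex_Main "HOL-Library.Extended_Real"
begin

text \<open>Candidates are c_1..c_m, represented by indices {1..m}; voters are {1..n}.
  A ballot vector is a function b :: nat \<Rightarrow> nat option, None meaning abstention.
  Utilities: u i j is the utility of voter i for candidate c_j.\<close>

datatype rule = RL | RC | RV

definition valid_ballot :: "nat \<Rightarrow> nat \<Rightarrow> (nat \<Rightarrow> nat option) \<Rightarrow> bool" where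
  "valid_ballot m n b \<longleftrightarrow> (\<forall>i\<in>{1..n}. b i = None \<or> (\<exists>c\<in>{1..m}. b i = Some c))"

definition sc :: "nat \<Rightarrow> (nat \<Rightarrow> nat option) \<Rightarrow> nat \<Rightarrow> nat" where
  "sc n b c = card {i\<in>{1..n}. b i = Some c}"

definition Mx :: "nat \<Rightarrow> nat \<Rightarrow> (nat \<Rightarrow> nat option) \<Rightarrow> nat" where
  "Mx m n b = Max ((\<lambda>c. sc n b c) ` {1..m})"

definition W :: "nat \<Rightarrow> nat \<Rightarrow> (nat \<Rightarrow> nat option) \<Rightarrow> nat set" where
  "W m n b = {c\<in>{1..m}. sc n b c = Mx m n b}"

definition fav :: "(nat \<Rightarrow> nat \<Rightarrow> nat) \<Rightarrow> nat \<Rightarrow> nat set \<Rightarrow> nat" where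
  "fav u i S = (THE c. c \<in> S \<and> (\<forall>d\<in>S. u i d \<le> u i c))"

definition topc :: "nat \<Rightarrow> (nat \<Rightarrow> nat \<Rightarrow> nat) \<Rightarrow> nat \<Rightarrow> nat" where
  "topc m u i = fav u i {1..m}"

text \<open>Candidate chosen by voter i under R^V when i is drawn.\<close>
definition vchoice :: "nat \<Rightarrow> nat \<Rightarrow> (nat \<Rightarrow> nat \<Rightarrow> nat) \<Rightarrow> (nat \<Rightarrow> nat option) \<Rightarrow> nat \<Rightarrow> nat" where
  "vchoice m n u b i =
     (case b i of Some c \<Rightarrow> (if c \<in> W m n b then c else fav u i (W m n b))
                | None \<Rightarrow> fav u i (W m n b))"

definition prob :: "rule \<Rightarrow> nat \<Rightarrow> nat \<Rightarrow> (nat \<Rightarrow> nat \<Rightarrow> nat) \<Rightarrow> (nat \<Rightarrow> nat option) \<Rightarrow> nat \<Rightarrow> real" where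
  "prob R m n u b j =
     (if card (W m n b) = 1 then (if j \<in> W m n b then 1 else 0)
      else (case R of
          RL \<Rightarrow> (if j = Min (W m n b) then 1 else 0)
        | RC \<Rightarrow> (if j \<in> W m n b then 1 / real (card (W m n b)) else 0)
        | RV \<Rightarrow> real (card {i\<in>{1..n}. vchoice m n u b i = j}) / real n))"

definition TU :: "rule \<Rightarrow> nat \<Rightarrow> nat \<Rightarrow> (nat \<Rightarrow> nat \<Rightarrow> nat) \<Rightarrow> real \<Rightarrow> (nat \<Rightarrow> nat option) \<Rightarrow> nat \<Rightarrow> ereal" where
  "TU R m n u \<epsilon> b i =
     (case b i of None \<Rightarrow> -\<infinity>
      | Some c \<Rightarrow> ereal ((\<Sum>j\<in>{1..m}. prob R m n u b j * real (u i j))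
                         + (if c = topc m u i then \<epsilon> else 0)))"

definition is_PNE :: "rule \<Rightarrow> nat \<Rightarrow> nat \<Rightarrow> (nat \<Rightarrow> nat \<Rightarrow> nat) \<Rightarrow> real \<Rightarrow> (nat \<Rightarrow> nat option) \<Rightarrow> bool" where
  "is_PNE R m n u \<epsilon> b \<longleftrightarrow> valid_ballot m n b \<and>
     (\<forall>i\<in>{1..n}. \<forall>b'\<in>{None} \<union> Some ` {1..m}. TU R m n u \<epsilon> b i \<ge> TU R m n u \<epsilon> (b(i := b')) i)"

end

theory Submission
  imports Defs
begin

lemma fav_eq:
  assumes "inj_on (u k) S" "x \<in> S" "\<forall>d\<in>S. u k d \<le> u k x"
  shows "fav u k S = x"
  unfolding fav_def
proof (rule the_equality)
  show "x \<in> S \<and> (\<forall>d\<in>S. u k d \<le> u k x)" using assms by auto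
next
  fix y assume "y \<in> S \<and> (\<forall>d\<in>S. u k d \<le> u k y)"
  then have "y \<in> S" "u k y = u k x" using assms by (auto intro: antisym)
  then show "y = x" using assms(1,2) by (meson inj_on_def)
qed

lemma fav_prop:
  assumes "finite S" "S \<noteq> {}" "inj_on (u k) S"
  shows "fav u k S \<in> S \<and> (\<forall>d\<in>S. u k d \<le> u k (fav u k S))"
proof -
  have "Max (u k ` S) \<in> u k ` S" using assms by simp
  then obtain x where x: "x \<in> S" "u k x = Max (u k ` S)" by auto
  have "\<forall>d\<in>S. u k d \<le> u k x" using x assms(1) by simp
  then have "fav u k S = x" using fav_eq[of u k S x] assms(3) x(1) by simp
  then show ?thesis using x \<open>\<forall>d\<in>S. u k d \<le> u k x\<close> by simp
qed

lemma fav_insert: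
  assumes "finite S" "S \<noteq> {}" "inj_on (u k) (insert a S)"
  shows "fav u k (insert a S) \<in> {fav u k S, a}"
proof -
  have inj: "inj_on (u k) S" using assms(3) by (meson inj_on_insert)
  have p: "fav u k (insert a S) \<in> insert a S \<and> (\<forall>d\<in>insert a S. u k d \<le> u k (fav u k (insert a S)))"
    using fav_prop[of "insert a S" u k] assms by simp
  show ?thesis
  proof (cases "fav u k (insert a S) = a")
    case False
    then have "fav u k (insert a S) \<in> S" using p by auto
    then have "fav u k S = fav u k (insert a S)" using fav_eq[of u k S] inj p by auto
    then show ?thesis by simp
  qed simp
qed

lemma W_sub: "W m n b \<subseteq> {1..m}" unfolding W_def by auto

lemma W_fin: "finite (W m n b)" by (rule finite_subset[OF W_sub]) simp

lemma sc_le: "c \<in> {1..m} \<Longrightarrow> sc n b c \<le> Mx m n b"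
  unfolding Mx_def by (intro Max_ge) auto

lemma W_ne: assumes "m \<ge> 1" shows "W m n b \<noteq> {}"
proof -
  have "Mx m n b \<in> (\<lambda>c. sc n b c) ` {1..m}" unfolding Mx_def using assms
    by (intro Max_in) auto
  then show ?thesis unfolding W_def by auto
qed

lemma vchoice_in:
  assumes "m \<ge> 1" "inj_on (u k) {1..m}"
  shows "vchoice m n u b k \<in> W m n b"
proof -
  have "inj_on (u k) (W m n b)" by (rule inj_on_subset[OF assms(2) W_sub])
  then have "fav u k (W m n b) \<in> W m n b"
    using fav_prop[of "W m n b" u k] W_fin W_ne[OF assms(1)] by blast
  then show ?thesis unfolding vchoice_def by (auto split: option.splits)
qed

lemma count_sum:
  assumes "finite N" "finite J" "v ` N \<subseteq> J"
  shows "(\<Sum>j\<in>J. real (card {k\<in>N. v k = j}) * f j) = (\<Sum>k\<in>N. f (v k))"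
proof -
  have "(\<Sum>k\<in>N. f (v k)) = (\<Sum>j\<in>J. \<Sum>k\<in>{k\<in>N. v k = j}. f (v k))"
    using sum.group[OF assms, of "\<lambda>k. f (v k)"] by simp
  also have "\<dots> = (\<Sum>j\<in>J. real (card {k\<in>N. v k = j}) * f j)"
    by (intro sum.cong refl) simp
  finally show ?thesis by simp
qed

lemma sum_delta_real:
  assumes "w \<in> {1..m::nat}"
  shows "(\<Sum>j\<in>{1..m}. (if j = w then 1 else 0) * (f j::real)) = f w"
proof -
  have "(\<Sum>j\<in>{1..m}. (if j = w then 1 else 0) * f j) = (\<Sum>j\<in>{1..m}. if j = w then f j else 0)"
    by (intro sum.cong) auto
  also have "\<dots> = f w" using assms by (simp add: sum.delta)
  finally show ?thesis .
qed

lemma EU_RL: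
  assumes "m \<ge> 1"
  shows "(\<Sum>j\<in>{1..m}. prob RL m n u b j * real (u i j)) = real (u i (Min (W m n b)))"
proof -
  have fin: "finite (W m n b)" and ne: "W m n b \<noteq> {}" using W_fin W_ne[OF assms] by auto
  have mn: "Min (W m n b) \<in> {1..m}" using Min_in[OF fin ne] W_sub by blast
  have "prob RL m n u b j = (if j = Min (W m n b) then 1 else 0)" for j
  proof (cases "card (W m n b) = 1")
    case True
    then obtain w where "W m n b = {w}" by (meson card_1_singletonE)
    then show ?thesis unfolding prob_def by simp
  qed (simp add: prob_def)
  then show ?thesis using sum_delta_real[OF mn, of "\<lambda>j. real (u i j)"] by simp
qed

lemma EU_RC:
  assumes "m \<ge> 1"
  shows "(\<Sum>j\<in>{1..m}. prob RC m n u b j * real (u i j)) = (\<Sum>j\<in>W m n b. real (u i j)) / real (card (W m n b))"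
proof -
  have "prob RC m n u b j = (if j \<in> W m n b then 1 / real (card (W m n b)) else 0)" for j
    unfolding prob_def by auto
  then have "(\<Sum>j\<in>{1..m}. prob RC m n u b j * real (u i j))
     = (\<Sum>j\<in>{1..m}. if j \<in> W m n b then real (u i j) / real (card (W m n b)) else 0)"
    by (intro sum.cong) auto
  also have "\<dots> = (\<Sum>j\<in>{1..m} \<inter> W m n b. real (u i j) / real (card (W m n b)))"
    by (simp add: sum.inter_restrict)
  also have "{1..m} \<inter> W m n b = W m n b" using W_sub by blast
  finally show ?thesis by (simp add: sum_divide_distrib)
qed

lemma EU_RV:
  assumes "m \<ge> 1" "n \<ge> 1" "\<forall>k\<in>{1..n}. inj_on (u k) {1..m}"
  shows "(\<Sum>j\<in>{1..m}. prob RV m n u b j * real (u i j))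
     = (\<Sum>k\<in>{1..n}. real (u i (vchoice m n u b k))) / real n"
proof (cases "card (W m n b) = 1")
  case True
  then obtain w where w: "W m n b = {w}" by (meson card_1_singletonE)
  have wm: "w \<in> {1..m}" using w W_sub by blast
  have v: "vchoice m n u b k = w" if "k \<in> {1..n}" for k
    using vchoice_in[OF assms(1), of u k n b] assms(3) that w by auto
  have "(\<Sum>j\<in>{1..m}. prob RV m n u b j * real (u i j)) = (\<Sum>j\<in>{1..m}. (if j = w then 1 else 0) * real (u i j))"
    by (intro sum.cong) (auto simp: prob_def True w)
  also have "\<dots> = real (u i w)" using sum_delta_real[OF wm] by simp
  also have "\<dots> = (\<Sum>k\<in>{1..n}. real (u i (vchoice m n u b k))) / real n"
    using v assms(2) by simp
  finally show ?thesis .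
next
  case False
  have sub: "vchoice m n u b ` {1..n} \<subseteq> {1..m}"
    using vchoice_in[OF assms(1)] assms(3) W_sub by blast
  have "(\<Sum>j\<in>{1..m}. prob RV m n u b j * real (u i j))
     = (\<Sum>j\<in>{1..m}. real (card {k\<in>{1..n}. vchoice m n u b k = j}) * real (u i j)) / real n"
    unfolding sum_divide_distrib using False by (intro sum.cong) (auto simp: prob_def)
  also have "\<dots> = (\<Sum>k\<in>{1..n}. real (u i (vchoice m n u b k))) / real n"
    using count_sum[OF _ _ sub, of "\<lambda>j. real (u i j)"] by simp
  finally show ?thesis .
qed

lemma Wchange:
  assumes m: "m \<ge> 1" and i: "i \<in> {1..n}" and a: "a \<in> {1..m}"
    and bi: "b i = Some c" and c: "c \<in> {1..m}" "c \<noteq> a" "c \<notin> W m n b"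
    and b': "b' = b(i := Some a)"
  shows "W m n b' = W m n b \<or> W m n b' = {a} \<or> (a \<notin> W m n b \<and> W m n b' = insert a (W m n b))"
proof -
  define M where "M = Mx m n b"
  have fin: "finite {1..n::nat}" by simp
  have sa: "sc n b' a = sc n b a + 1"
  proof -
    have "{k\<in>{1..n}. b' k = Some a} = insert i {k\<in>{1..n}. b k = Some a}"
      using i b' by auto
    moreover have "i \<notin> {k\<in>{1..n}. b k = Some a}" using bi c by auto
    ultimately show ?thesis unfolding sc_def by simp
  qed
  have sle: "sc n b' d \<le> sc n b d" if "d \<noteq> a" for d
    unfolding sc_def using that b' by (intro card_mono) auto
  have seq: "sc n b' d = sc n b d" if "d \<noteq> a" "d \<noteq> c" for d
  proof -
    have "{k\<in>{1..n}. b' k = Some d} = {k\<in>{1..n}. b k = Some d}"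
      using that b' bi by auto
    then show ?thesis unfolding sc_def by simp
  qed
  have scle: "sc n b d \<le> M" if "d \<in> {1..m}" for d using sc_le that M_def by simp
  have scc: "sc n b c < M" using scle[OF c(1)] c(1,3) M_def unfolding W_def by auto
  obtain w where w: "w \<in> W m n b" using W_ne[OF m] by blast
  have wM: "sc n b w = M" "w \<in> {1..m}" using w M_def unfolding W_def by auto
  have Wdef: "W m n b = {d\<in>{1..m}. sc n b d = M}" unfolding W_def M_def ..
  show ?thesis
  proof (cases "sc n b a + 1 \<le> M")
    case True
    have wa: "w \<noteq> a" using wM True by auto
    have wc: "w \<noteq> c" using wM scc by auto
    have M': "Mx m n b' = M" unfolding Mx_def
    proof (rule Max_eqI)
      show "finite ((\<lambda>c. sc n b' c) ` {1..m})" by simp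
      show "y \<le> M" if "y \<in> (\<lambda>c. sc n b' c) ` {1..m}" for y
      proof -
        obtain d where d: "d \<in> {1..m}" "y = sc n b' d" using \<open>y \<in> (\<lambda>c. sc n b' c) ` {1..m}\<close> by blast
        show ?thesis
        proof (cases "d = a")
          case False
          then show ?thesis using d sle[OF False] scle[OF d(1)] by linarith
        qed (use d sa True in simp)
      qed
      show "M \<in> (\<lambda>c. sc n b' c) ` {1..m}" using seq[OF wa wc] wM by force
    qed
    have W': "W m n b' = {d\<in>{1..m}. sc n b' d = M}" unfolding W_def M' ..
    have anW: "a \<notin> W m n b" using Wdef True by auto
    show ?thesis
    proof (cases "sc n b a + 1 = M")
      case True
      have "W m n b' = insert a (W m n b)"
        unfolding W' Wdef
      proof (rule set_eqI)
        fix d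
        show "d \<in> {d \<in> {1..m}. sc n b' d = M} \<longleftrightarrow> d \<in> insert a {d \<in> {1..m}. sc n b d = M}"
        proof (cases "d = a")
          case False
          show ?thesis
          proof (cases "d = c")
            case True
            then show ?thesis using False sle[OF False] scc by auto
          qed (use False seq in auto)
        qed (use True sa a in auto)
      qed
      then show ?thesis using anW by simp
    next
      case False
      have "W m n b' = W m n b"
        unfolding W' Wdef
      proof (rule set_eqI)
        fix d
        show "d \<in> {d \<in> {1..m}. sc n b' d = M} \<longleftrightarrow> d \<in> {d \<in> {1..m}. sc n b d = M}"
        proof (cases "d = a")
          case F: False
          show ?thesis
          proof (cases "d = c")
            case True
            then show ?thesis using F sle[OF F] scc by auto
          qed (use F seq in auto)
        qed (use False \<open>sc n b a + 1 \<le> M\<close> sa in auto)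
      qed
      then show ?thesis by simp
    qed
  next
    case False
    have M': "Mx m n b' = sc n b a + 1" unfolding Mx_def
    proof (rule Max_eqI)
      show "finite ((\<lambda>c. sc n b' c) ` {1..m})" by simp
      show "y \<le> sc n b a + 1" if "y \<in> (\<lambda>c. sc n b' c) ` {1..m}" for y
      proof -
        obtain d where d: "d \<in> {1..m}" "y = sc n b' d" using \<open>y \<in> (\<lambda>c. sc n b' c) ` {1..m}\<close> by blast
        show ?thesis
        proof (cases "d = a")
          case False
          then show ?thesis using d sle[OF False] scle[OF d(1)] \<open>\<not> sc n b a + 1 \<le> M\<close> by linarith
        qed (use d sa in simp)
      qed
      show "sc n b a + 1 \<in> (\<lambda>c. sc n b' c) ` {1..m}" using sa a by force
    qed
    have "W m n b' = {a}"
    proof -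
      have "sc n b' d < sc n b a + 1" if "d \<in> {1..m}" "d \<noteq> a" for d
        using sle[OF that(2)] scle[OF that(1)] False by linarith
      then show ?thesis unfolding W_def M' using sa a by fastforce
    qed
    then show ?thesis by simp
  qed
qed

lemma avg_le:
  fixes S k x :: real
  assumes "k > 0" "S \<le> k * x"
  shows "S / k \<le> (S + x) / (k + 1)"
proof -
  have "S * (k + 1) \<le> (S + x) * k" using assms(2) by (simp add: algebra_simps)
  then show ?thesis using assms(1) by (simp add: divide_le_eq le_divide_eq pos_divide_le_eq)
qed
lemma avg_le2:
  fixes S k x :: real
  assumes "k > 0" "S \<le> k * x"
  shows "S / k \<le> x"
  using assms by (simp add: pos_divide_le_eq mult.commute)

lemma core:
  assumes m: "m \<ge> 1" and n: "n \<ge> 1" and inj: "\<forall>k\<in>{1..n}. inj_on (u k) {1..m}"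
    and i: "i \<in> {1..n}" and a: "a \<in> {1..m}" and amax: "\<forall>d\<in>{1..m}. u i d \<le> u i a"
    and bi: "b i = Some c" and c: "c \<in> {1..m}" "c \<noteq> a" "c \<notin> W m n b"
    and b': "b' = b(i := Some a)"
  shows "(\<Sum>j\<in>{1..m}. prob R m n u b j * real (u i j)) \<le> (\<Sum>j\<in>{1..m}. prob R m n u b' j * real (u i j))"
proof -
  have WC: "W m n b' = W m n b \<or> W m n b' = {a} \<or> (a \<notin> W m n b \<and> W m n b' = insert a (W m n b))"
    using Wchange[OF m i a bi c b'] .
  have fin: "finite (W m n b)" and ne: "W m n b \<noteq> {}" using W_fin W_ne[OF m] by auto
  have ule: "u i x \<le> u i a" if "x \<in> W m n b" for x using amax that W_sub by blast
  show ?thesis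
  proof (cases R)
    case RL
    have "Min (W m n b') \<in> {Min (W m n b), a}"
      using WC
    proof (elim disjE conjE)
      assume eq: "W m n b' = insert a (W m n b)"
      show ?thesis unfolding eq Min_insert[OF fin ne] by (simp add: min_def)
    qed simp_all
    moreover have "Min (W m n b) \<in> W m n b" using Min_in[OF fin ne] .
    ultimately have "u i (Min (W m n b)) \<le> u i (Min (W m n b'))" using ule by auto
    then show ?thesis unfolding RL EU_RL[OF m] by simp
  next
    case RC
    define S where "S = (\<Sum>j\<in>W m n b. real (u i j))"
    define k where "k = real (card (W m n b))"
    have kpos: "k > 0" unfolding k_def using fin ne by (simp add: card_gt_0_iff)
    have Sle: "S \<le> k * real (u i a)" unfolding S_def k_def
      using sum_bounded_above[of "W m n b" "\<lambda>j. real (u i j)" "real (u i a)"] ule by simp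
    have "S / k \<le> (\<Sum>j\<in>W m n b'. real (u i j)) / real (card (W m n b'))"
      using WC
    proof (elim disjE conjE)
      assume "W m n b' = W m n b" then show ?thesis unfolding S_def k_def by simp
    next
      assume "W m n b' = {a}" then show ?thesis using avg_le2[OF kpos Sle] by simp
    next
      assume an: "a \<notin> W m n b" and eq: "W m n b' = insert a (W m n b)"
      have "(\<Sum>j\<in>W m n b'. real (u i j)) = S + real (u i a)"
        unfolding eq S_def using fin an by simp
      moreover have "real (card (W m n b')) = k + 1" unfolding eq k_def using fin an by simp
      ultimately show ?thesis using avg_le[OF kpos Sle] by simp
    qed
    then show ?thesis unfolding RC EU_RC[OF m] S_def k_def .
  next
    case RV
    have pt: "u i (vchoice m n u b k) \<le> u i (vchoice m n u b' k)" if k: "k \<in> {1..n}" for k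
    proof -
      have injk: "inj_on (u k) {1..m}" using inj k by blast
      have vin: "vchoice m n u b k \<in> W m n b" using vchoice_in[of m u k] m injk by blast
      have "vchoice m n u b' k \<in> {vchoice m n u b k, a}"
        using WC
      proof (elim disjE conjE)
        assume eq: "W m n b' = W m n b"
        show ?thesis
        proof (cases "k = i")
          case True
          have "b' k = Some a" using True b' by simp
          then show ?thesis unfolding vchoice_def eq using True bi c by auto
        next
          case False
          have "b' k = b k" using False b' by simp
          then show ?thesis unfolding vchoice_def eq by simp
        qed
      next
        assume eq: "W m n b' = {a}"
        have "vchoice m n u b' k \<in> W m n b'" using vchoice_in[of m u k] m injk by blast
        then show ?thesis using eq by simp
      next
        assume an: "a \<notin> W m n b" and eq: "W m n b' = insert a (W m n b)"
        have "insert a (W m n b) \<subseteq> {1..m}" using a W_sub by blast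
        then have injW: "inj_on (u k) (insert a (W m n b))" by (rule inj_on_subset[OF injk])
        have fi: "fav u k (insert a (W m n b)) \<in> {fav u k (W m n b), a}"
          using fav_insert[of "W m n b" u k a] fin ne injW by blast
        show ?thesis
        proof (cases "k = i")
          case True
          have "b' k = Some a" using True b' by simp
          then show ?thesis unfolding vchoice_def eq by simp
        next
          case False
          have "b' k = b k" using False b' by simp
          then show ?thesis unfolding vchoice_def eq using fi an
            by (auto split: option.splits)
        qed
      qed
      then show ?thesis using ule vin by auto
    qed
    have "(\<Sum>k\<in>{1..n}. real (u i (vchoice m n u b k))) \<le> (\<Sum>k\<in>{1..n}. real (u i (vchoice m n u b' k)))"
      using pt by (intro sum_mono) simp
    then show ?thesis unfolding RV EU_RV[OF m n inj] by (rule divide_right_mono) simp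
  qed
qed


theorem proposition2:
  fixes R :: rule and m n :: nat and u :: "nat \<Rightarrow> nat \<Rightarrow> nat" and \<epsilon> :: real
    and b :: "nat \<Rightarrow> nat option"
  assumes "m \<ge> 1" and "n \<ge> 1"
    and "\<forall>i\<in>{1..n}. inj_on (u i) {1..m}"
    and "0 < \<epsilon>" and "\<epsilon> < min (1 / real m) (1 / real n)"
    and "is_PNE R m n u \<epsilon> b"
  shows "\<forall>i\<in>{1..n}. b i = Some (topc m u i) \<or> (\<exists>c\<in>W m n b. b i = Some c)"
proof
  fix i assume i: "i \<in> {1..n}"
  have injm: "inj_on (u i) {1..m}" using assms(3) i by blast
  define a where "a = topc m u i"
  have ap: "a \<in> {1..m} \<and> (\<forall>d\<in>{1..m}. u i d \<le> u i a)"
  proof -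
    have ne: "{1..m} \<noteq> {}" using assms(1) by simp
    have "fav u i {1..m} \<in> {1..m} \<and> (\<forall>d\<in>{1..m}. u i d \<le> u i (fav u i {1..m}))"
      using fav_prop[of "{1..m}" u i] injm ne by blast
    then show ?thesis unfolding a_def topc_def .
  qed
  have valid: "valid_ballot m n b"
    and dev: "\<forall>i\<in>{1..n}. \<forall>b'\<in>{None} \<union> Some ` {1..m}. TU R m n u \<epsilon> b i \<ge> TU R m n u \<epsilon> (b(i := b')) i"
    using assms(6) unfolding is_PNE_def by auto
  define b' where "b' = b(i := Some a)"
  have sa: "Some a \<in> {None} \<union> Some ` {1..m}" using ap by blast
  have dv: "TU R m n u \<epsilon> b' i \<le> TU R m n u \<epsilon> b i"
    unfolding b'_def using dev i sa by blast
  have TU': "TU R m n u \<epsilon> b' i = ereal ((\<Sum>j\<in>{1..m}. prob R m n u b' j * real (u i j)) + \<epsilon>)"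
    unfolding TU_def b'_def a_def by simp
  show "b i = Some (topc m u i) \<or> (\<exists>c\<in>W m n b. b i = Some c)"
  proof (rule ccontr)
    assume neg: "\<not> (b i = Some (topc m u i) \<or> (\<exists>c\<in>W m n b. b i = Some c))"
    have "b i = None \<or> (\<exists>c\<in>{1..m}. b i = Some c)" using valid i unfolding valid_ballot_def by blast
    then show False
    proof
      assume "b i = None"
      then have "TU R m n u \<epsilon> b i = -\<infinity>" unfolding TU_def by simp
      then show False using dv unfolding TU' by simp
    next
      assume "\<exists>c\<in>{1..m}. b i = Some c"
      then obtain c where c: "c \<in> {1..m}" "b i = Some c" by blast
      have ca: "c \<noteq> a" using neg c a_def by auto
      have cW: "c \<notin> W m n b" using neg c by auto
      have TU: "TU R m n u \<epsilon> b i = ereal (\<Sum>j\<in>{1..m}. prob R m n u b j * real (u i j))"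
        unfolding TU_def using c(2) ca[unfolded a_def] by simp
      have le: "(\<Sum>j\<in>{1..m}. prob R m n u b j * real (u i j)) \<le> (\<Sum>j\<in>{1..m}. prob R m n u b' j * real (u i j))"
        using core[OF assms(1,2,3) i conjunct1[OF ap] conjunct2[OF ap] c(2) c(1) ca cW b'_def] .
      have "ereal ((\<Sum>j\<in>{1..m}. prob R m n u b' j * real (u i j)) + \<epsilon>) \<le> ereal (\<Sum>j\<in>{1..m}. prob R m n u b j * real (u i j))"
        using dv unfolding TU TU' .
      then have "(\<Sum>j\<in>{1..m}. prob R m n u b' j * real (u i j)) + \<epsilon> \<le> (\<Sum>j\<in>{1..m}. prob R m n u b j * real (u i j))"
        by (simp only: ereal_less_eq)
      then show False using le assms(4) by linarith
    qed
  qed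
qed

end
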